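(* Let $G$ be a connected graph with vertex set $\{u_1,\dots,u_m\}$, $m\ge2$, and $\kappa(G)=\delta(G)>0$, and let $n\ge3$. Let $S\subseteq V(G\times K_n)$ with $|S|=(n-1)\delta(G)$ such that $S_i\subseteq S$ for some $i\in\{1,\dots,m\}$. Then $G\times K_n-S$ is connected.
   Context: The Kronecker product $G_1\times G_2$ has vertex set $V(G_1)\times V(G_2)$, with $(u_1,v_1)(u_2,v_2)$ an edge iff $u_1u_2\in E(G_1)$ and $v_1v_2\in E(G_2)$. $K_n$ is the complete graph with $V(K_n)=\{v_1,\dots,v_n\}$, and $S_i=\{u_i\}\times V(K_n)$ for $i=1,\dots,m$. $\kappa$ denotes vertex connectivity and $\delta$ minimum degree. *)

theory Defs
  imports Main
begin

definition simple_graph :: "'a set \<Rightarrow> ('a \<Rightarrow> 'a \<Rightarrow> bool) \<Rightarrow> bool" where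
  "simple_graph V E \<longleftrightarrow> finite V \<and> (\<forall>x y. E x y \<longrightarrow> x \<in> V \<and> y \<in> V)
     \<and> (\<forall>x y. E x y \<longrightarrow> E y x) \<and> (\<forall>x. \<not> E x x)"

text \<open>The subgraph induced on V (so G - S is the graph on V - S) is connected:
nonempty, and any two vertices are joined by a walk inside V.\<close>
definition connected_on :: "'a set \<Rightarrow> ('a \<Rightarrow> 'a \<Rightarrow> bool) \<Rightarrow> bool" where
  "connected_on V E \<longleftrightarrow> V \<noteq> {} \<and>
     (\<forall>x\<in>V. \<forall>y\<in>V. (\<lambda>a b. E a b \<and> a \<in> V \<and> b \<in> V)\<^sup>*\<^sup>* x y)"

definition degree :: "'a set \<Rightarrow> ('a \<Rightarrow> 'a \<Rightarrow> bool) \<Rightarrow> 'a \<Rightarrow> nat" where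
  "degree V E v = card {u \<in> V. E v u}"

definition min_degree :: "'a set \<Rightarrow> ('a \<Rightarrow> 'a \<Rightarrow> bool) \<Rightarrow> nat" where
  "min_degree V E = Min (degree V E ` V)"

definition vertex_connectivity :: "'a set \<Rightarrow> ('a \<Rightarrow> 'a \<Rightarrow> bool) \<Rightarrow> nat" where
  "vertex_connectivity V E =
     Min {card S | S. S \<subseteq> V \<and> (\<not> connected_on (V - S) E \<or> card (V - S) \<le> 1)}"

definition kron_edges ::
  "('a \<Rightarrow> 'a \<Rightarrow> bool) \<Rightarrow> ('b \<Rightarrow> 'b \<Rightarrow> bool) \<Rightarrow> ('a \<times> 'b) \<Rightarrow> ('a \<times> 'b) \<Rightarrow> bool" where
  "kron_edges E1 E2 x y \<longleftrightarrow> E1 (fst x) (fst y) \<and> E2 (snd x) (snd y)"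

text \<open>Complete graph K_n on vertex set {1..n} (vertex v_j is represented by j).\<close>
definition K_vertices :: "nat \<Rightarrow> nat set" where
  "K_vertices n = {1..n}"

definition K_edges :: "nat \<Rightarrow> nat \<Rightarrow> nat \<Rightarrow> bool" where
  "K_edges n x y \<longleftrightarrow> x \<in> {1..n} \<and> y \<in> {1..n} \<and> x \<noteq> y"

end

theory Submission
  imports Defs
begin

theorem mainTheorem5:
  fixes V :: "'a set" and E :: "'a \<Rightarrow> 'a \<Rightarrow> bool"
    and n :: nat and S :: "('a \<times> nat) set"
  assumes "simple_graph V E"
    and "connected_on V E"
    and "card V \<ge> 2"
    and "vertex_connectivity V E = min_degree V E"
    and "min_degree V E > 0"
    and "n \<ge> 3"
    and "S \<subseteq> V \<times> K_vertices n"
    and "card S = (n - 1) * min_degree V E"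
    and "\<exists>u\<in>V. {u} \<times> K_vertices n \<subseteq> S"
  shows "connected_on (V \<times> K_vertices n - S) (kron_edges E (K_edges n))"
proof -
  define \<delta> where "\<delta> = min_degree V E"
  define K where "K = {1..n::nat}"
  define R where "R = V \<times> K - S"
  define H where "H = kron_edges E (K_edges n)"
  define F where "F u = {j\<in>K. (u,j) \<notin> S}" for u
  define c where "c u = card {j\<in>K. (u,j) \<in> S}" for u
  define P where "P = {u\<in>V. card (F u) \<le> 1}"
  have finV: "finite V" and Esym: "\<And>x y. E x y \<Longrightarrow> E y x"
    and Ein: "\<And>x y. E x y \<Longrightarrow> x \<in> V \<and> y \<in> V"
    using assms(1) unfolding simple_graph_def by auto
  have finK: "finite K" and cardK: "card K = n" unfolding K_def by auto
  have deg: "\<And>u. u \<in> V \<Longrightarrow> \<delta> \<le> card {v\<in>V. E u v}"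
  proof -
    fix u assume "u \<in> V"
    then have "Min (degree V E ` V) \<le> degree V E u" using finV by (intro Min_le) auto
    then show "\<delta> \<le> card {v\<in>V. E u v}" unfolding \<delta>_def min_degree_def degree_def
      by (simp add: conj_commute)
  qed
  have cF: "\<And>u. c u + card (F u) = n"
  proof -
    fix u
    have "{j\<in>K. (u,j) \<in> S} \<union> F u = K" "{j\<in>K. (u,j) \<in> S} \<inter> F u = {}"
      unfolding F_def by auto
    then show "c u + card (F u) = n" unfolding c_def using finK cardK
      by (metis card_Un_disjoint finite_Un)
  qed
  have cardS: "card S = (\<Sum>u\<in>V. c u)"
  proof -
    have "S = (SIGMA u:V. {j\<in>K. (u,j) \<in> S})" using assms(7) unfolding K_def K_vertices_def by auto
    moreover have "card (SIGMA u:V. {j\<in>K. (u,j) \<in> S}) = (\<Sum>u\<in>V. card {j\<in>K. (u,j) \<in> S})"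
      using finV finK by (intro card_SigmaI) auto
    ultimately show ?thesis unfolding c_def by metis
  qed
  obtain w where w: "w \<in> V" "{w} \<times> K \<subseteq> S" using assms(9) unfolding K_def K_vertices_def by auto
  have Fw: "F w = {}" using w unfolding F_def by auto
  have cw: "c w = n" using cF[of w] Fw by simp
  have wP: "w \<in> P" using w Fw unfolding P_def by auto
  have PV: "P \<subseteq> V" unfolding P_def by auto
  have finP: "finite P" using PV finV finite_subset by blast
  have cP: "\<And>u. u \<in> P \<Longrightarrow> n - 1 \<le> c u"
  proof -
    fix u assume "u \<in> P"
    then have "card (F u) \<le> 1" unfolding P_def by auto
    then show "n - 1 \<le> c u" using cF[of u] by linarith
  qed
  have sumP: "(n-1) * card P + 1 \<le> (\<Sum>u\<in>P. c u)"
  proof -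
    have "(\<Sum>u\<in>P. c u) = c w + (\<Sum>u\<in>P-{w}. c u)" using wP finP by (simp add: sum.remove)
    moreover have "of_nat (card (P-{w})) * (n-1) \<le> (\<Sum>u\<in>P-{w}. c u)"
      by (rule sum_bounded_below) (use cP in auto)
    moreover have "card (P - {w}) = card P - 1" using wP finP by simp
    moreover have "card P \<ge> 1" using wP finP by (metis One_nat_def Suc_leI card_gt_0_iff empty_iff)
    ultimately have "n + (card P - 1) * (n-1) \<le> (\<Sum>u\<in>P. c u)" using cw by simp
    moreover have "(card P - 1) * (n-1) + (n - 1) = card P * (n-1)"
      using \<open>card P \<ge> 1\<close> by (cases "card P") auto
    ultimately show ?thesis using assms(6) by (simp add: mult.commute)
  qed
  have sumVP: "(\<Sum>u\<in>P. c u) \<le> (\<Sum>u\<in>V. c u)" using PV finV by (intro sum_mono2) auto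
  have Pcard: "card P < \<delta>"
  proof (rule ccontr)
    assume "\<not> card P < \<delta>"
    then have "(n-1) * \<delta> \<le> (n-1) * card P" by simp
    then show False using sumP sumVP cardS assms(8) unfolding \<delta>_def by linarith
  qed
  have connQ: "connected_on (V - P) E"
  proof (rule ccontr)
    assume nc: "\<not> connected_on (V - P) E"
    define M where "M = {card S | S. S \<subseteq> V \<and> (\<not> connected_on (V - S) E \<or> card (V - S) \<le> 1)}"
    have "card P \<in> M" unfolding M_def using nc PV by auto
    moreover have "finite M"
    proof -
      have "M \<subseteq> card ` Pow V" unfolding M_def by auto
      then show ?thesis using finV finite_subset by blast
    qed
    ultimately have "Min M \<le> card P" by simp
    then show False using assms(4) Pcard unfolding vertex_connectivity_def M_def \<delta>_def by simp
  qed
  have richnb: "\<And>u. u \<in> V \<Longrightarrow> \<exists>v. v \<in> V - P \<and> E u v"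
  proof (rule ccontr)
    fix u assume u: "u \<in> V" and nv: "\<not> (\<exists>v. v \<in> V - P \<and> E u v)"
    then have "{v\<in>V. E u v} \<subseteq> P" by auto
    then have "card {v\<in>V. E u v} \<le> card P" using finP by (intro card_mono)
    then show False using deg[OF u] Pcard by simp
  qed
  have two: "\<And>u. u \<in> V - P \<Longrightarrow> \<exists>a b. a \<in> F u \<and> b \<in> F u \<and> a \<noteq> b"
  proof -
    fix u assume "u \<in> V - P"
    then have "2 \<le> card (F u)" unfolding P_def by auto
    then show "\<exists>a b. a \<in> F u \<and> b \<in> F u \<and> a \<noteq> b"
    proof -
      assume h: "2 \<le> card (F u)"
      then obtain a B where aB: "F u = insert a B" "a \<notin> B" "1 \<le> card B"
        using card_le_Suc_iff[of 1 "F u"] by (auto simp: numeral_2_eq_2)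
      then obtain b where "b \<in> B" by fastforce
      then show ?thesis using aB by blast
    qed
  qed
  have inR: "\<And>u j. (u,j) \<in> R \<longleftrightarrow> u \<in> V \<and> j \<in> F u" unfolding R_def F_def by auto

  have richF: "\<And>u. u \<in> V - P \<Longrightarrow> \<exists>a. (u,a) \<in> R" using two inR by blast
  obtain u0 where u0: "u0 \<in> V - P" using connQ unfolding connected_on_def by auto
  have Rne: "R \<noteq> {}" using richF[OF u0] by auto
  define rel where "rel = (\<lambda>a b. H a b \<and> a \<in> R \<and> b \<in> R)"
  have "\<forall>x\<in>R. \<forall>y\<in>R. rel\<^sup>*\<^sup>* x y"
  proof (intro ballI)
    fix x y assume xR: "x \<in> R" and yR: "y \<in> R"
    show "rel\<^sup>*\<^sup>* x y"
    proof (rule ccontr)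
      assume nr: "\<not> rel\<^sup>*\<^sup>* x y"
      define X where "X = {z\<in>R. rel\<^sup>*\<^sup>* x z}"
      define A where "A = {u. \<exists>j. (u,j) \<in> X}"
      define B where "B = {u. \<exists>j. (u,j) \<in> R - X}"
      have xX: "x \<in> X" using xR unfolding X_def by auto
      have yX: "y \<in> R - X" using yR nr unfolding X_def by auto
      have L: "\<And>u j v l. (u,j) \<in> X \<Longrightarrow> (v,l) \<in> R - X \<Longrightarrow> E u v \<Longrightarrow> j = l"
      proof (rule ccontr)
        fix u j v l assume uj: "(u,j) \<in> X" and vl: "(v,l) \<in> R - X" and e: "E u v" and ne: "j \<noteq> l"
        have "j \<in> K" "l \<in> K" using uj vl unfolding X_def R_def by auto
        then have "H (u,j) (v,l)" using e ne unfolding H_def kron_edges_def K_edges_def K_def by auto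
        then have "rel (u,j) (v,l)" using uj vl unfolding rel_def X_def by auto
        moreover have "rel\<^sup>*\<^sup>* x (u,j)" using uj unfolding X_def by auto
        ultimately have "rel\<^sup>*\<^sup>* x (v,l)" by (metis rtranclp.rtrancl_into_rtrancl)
        then show False using vl unfolding X_def by auto
      qed
      have XR: "X \<subseteq> R" unfolding X_def by auto
      have keyAB: "\<And>u v. u \<in> V-P \<Longrightarrow> E u v \<Longrightarrow> u \<notin> B \<Longrightarrow> v \<notin> B"
      proof -
        fix u v assume u: "u \<in> V-P" and e: "E u v" and nB: "u \<notin> B"
        obtain a b where ab: "a \<in> F u" "b \<in> F u" "a \<noteq> b" using two[OF u] by blast
        have "(u,a) \<in> X" "(u,b) \<in> X" using ab u nB inR unfolding B_def by auto
        then show "v \<notin> B" using L e ab(3) unfolding B_def by blast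
      qed
      have keyBA: "\<And>u v. u \<in> V-P \<Longrightarrow> E u v \<Longrightarrow> u \<notin> A \<Longrightarrow> v \<notin> A"
      proof -
        fix u v assume u: "u \<in> V-P" and e: "E u v" and nA: "u \<notin> A"
        obtain a b where ab: "a \<in> F u" "b \<in> F u" "a \<noteq> b" using two[OF u] by blast
        have "(u,a) \<in> R - X" "(u,b) \<in> R - X" using ab u nA inR unfolding A_def by auto
        moreover have "E v u" using Esym e by blast
        ultimately show "v \<notin> A"
        proof -
          assume h: "(u,a) \<in> R - X" "(u,b) \<in> R - X" "E v u"
          show "v \<notin> A"
          proof
            assume "v \<in> A"
            then obtain l where "(v,l) \<in> X" unfolding A_def by auto
            then have "l = a" "l = b" using L h by blast+
            then show False using ab(3) by simp
          qed
        qed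
      qed
      have AorB: "\<And>u. u \<in> V - P \<Longrightarrow> u \<in> A \<or> u \<in> B"
        using richF unfolding A_def B_def by blast
      have pres: "\<And>u v. u \<in> V-P \<Longrightarrow> v \<in> V-P \<Longrightarrow> E u v \<Longrightarrow> (u \<in> A \<longleftrightarrow> v \<in> A) \<and> (u \<in> B \<longleftrightarrow> v \<in> B)"
        using keyAB keyBA AorB Esym by metis
      have const: "\<And>u. u \<in> V - P \<Longrightarrow> (u \<in> A \<longleftrightarrow> u0 \<in> A) \<and> (u \<in> B \<longleftrightarrow> u0 \<in> B)"
      proof -
        fix u assume u: "u \<in> V - P"
        have "(\<lambda>a b. E a b \<and> a \<in> V - P \<and> b \<in> V - P)\<^sup>*\<^sup>* u0 u"
          using connQ u0 u unfolding connected_on_def by blast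
        then show "(u \<in> A \<longleftrightarrow> u0 \<in> A) \<and> (u \<in> B \<longleftrightarrow> u0 \<in> B)"
        proof (induction rule: rtranclp_induct)
          case base then show ?case by simp
        next
          case (step b c) then show ?case using pres by blast
        qed
      qed
      show False
      proof (cases "u0 \<in> A \<and> u0 \<in> B")
        case False
        then have "u0 \<notin> A \<or> u0 \<notin> B" by blast
        then show False
        proof
          assume nA: "u0 \<notin> A"
          obtain v l where xe: "x = (v,l)" by (cases x)
          have "v \<in> V" using xR xe unfolding R_def by auto
          then obtain u where u: "u \<in> V - P" "E v u" using richnb by blast
          have "u \<notin> A" using const[OF u(1)] nA by simp
          obtain a b where ab: "a \<in> F u" "b \<in> F u" "a \<noteq> b" using two[OF u(1)] by blast
          have "(u,a) \<in> R - X" "(u,b) \<in> R - X" using ab u \<open>u \<notin> A\<close> inR unfolding A_def by auto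
          then have "l = a" "l = b" using L xX xe u(2) by blast+
          then show False using ab(3) by simp
        next
          assume nB: "u0 \<notin> B"
          obtain v l where ye: "y = (v,l)" by (cases y)
          have "v \<in> V" using yR ye unfolding R_def by auto
          then obtain u where u: "u \<in> V - P" "E v u" using richnb by blast
          have "u \<notin> B" using const[OF u(1)] nB by simp
          obtain a b where ab: "a \<in> F u" "b \<in> F u" "a \<noteq> b" using two[OF u(1)] by blast
          have "(u,a) \<in> X" "(u,b) \<in> X" using ab u \<open>u \<notin> B\<close> inR unfolding B_def by auto
          moreover have "E u v" using u(2) Esym by blast
          ultimately have "a = l" "b = l" using L yX ye by blast+
          then show False using ab(3) by simp
        qed
      next
        case True
        have allAB: "\<And>u. u \<in> V - P \<Longrightarrow> u \<in> A \<and> u \<in> B" using const True by blast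
        have small: "\<And>u. u \<in> V - P \<Longrightarrow> card (F u) \<le> 2"
        proof -
          fix u assume u: "u \<in> V - P"
          then obtain v where v: "v \<in> V - P" "E u v" using richnb by blast
          obtain l where l: "(v,l) \<in> R - X" using allAB[OF v(1)] unfolding B_def by auto
          obtain l' where l': "(v,l') \<in> X" using allAB[OF v(1)] unfolding A_def by auto
          have "F u \<subseteq> {l, l'}"
          proof
            fix j assume "j \<in> F u"
            then have uj: "(u,j) \<in> R" using inR u by auto
            show "j \<in> {l, l'}"
            proof (cases "(u,j) \<in> X")
              case True then show ?thesis using L l v(2) by blast
            next
              case False
              then have "(u,j) \<in> R - X" using uj by auto
              moreover have "E v u" using v(2) Esym by blast
              ultimately show ?thesis using L l' by blast
            qed
          qed
          then have "card (F u) \<le> card {l, l'}" by (intro card_mono) auto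
          also have "\<dots> \<le> 2" by (simp add: card_insert_if)
          finally show "card (F u) \<le> 2" .
        qed
        have cQ: "\<And>u. u \<in> V - P \<Longrightarrow> n - 2 \<le> c u" 
        proof -
          fix u assume "u \<in> V - P"
          then have "card (F u) \<le> 2" by (rule small)
          then show "n - 2 \<le> c u" using cF[of u] by linarith
        qed
        obtain a where a: "(u0,a) \<in> X" using allAB[OF u0] unfolding A_def by auto
        obtain v0 where v0: "v0 \<in> V - P" "E u0 v0" using richnb u0 by blast
        define N1 where "N1 = {v\<in>V. E u0 v} - P"
        define N2 where "N2 = {v\<in>V. E v0 v} - P"
        have N1a: "\<And>v. v \<in> N1 \<Longrightarrow> (v,a) \<in> R - X"
        proof -
          fix v assume v: "v \<in> N1"
          then obtain l where l: "(v,l) \<in> R - X" using allAB unfolding N1_def B_def by blast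
          then have "a = l" using L a v unfolding N1_def by blast
          then show "(v,a) \<in> R - X" using l by simp
        qed
        have v0a: "(v0,a) \<in> R - X" using N1a v0 Ein unfolding N1_def by blast
        have N2a: "\<And>v. v \<in> N2 \<Longrightarrow> (v,a) \<in> X"
        proof -
          fix v assume v: "v \<in> N2"
          then obtain l where l: "(v,l) \<in> X" using allAB unfolding N2_def A_def by blast
          have "E v v0" using v Esym unfolding N2_def by blast
          then have "l = a" using L l v0a by blast
          then show "(v,a) \<in> X" using l by simp
        qed
        have disj12: "N1 \<inter> N2 = {}" using N1a N2a by blast
        have N1sub: "N1 \<subseteq> V - P" and N2sub: "N2 \<subseteq> V - P" unfolding N1_def N2_def by auto
        have finN1: "finite N1" and finN2: "finite N2"
          using N1sub N2sub finV finite_subset by (blast, blast)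
        have cN1: "\<delta> - card P \<le> card N1"
        proof -
          have "card {v\<in>V. E u0 v} - card P \<le> card N1" unfolding N1_def using finP
            by (rule diff_card_le_card_Diff)
          moreover have "\<delta> \<le> card {v\<in>V. E u0 v}" using deg u0 by blast
          ultimately show ?thesis by linarith
        qed
        have cN2: "\<delta> - card P \<le> card N2"
        proof -
          have "card {v\<in>V. E v0 v} - card P \<le> card N2" unfolding N2_def using finP
            by (rule diff_card_le_card_Diff)
          moreover have "\<delta> \<le> card {v\<in>V. E v0 v}" using deg v0 by blast
          ultimately show ?thesis by linarith
        qed
        have s1: "of_nat (card N1) * (n-2) \<le> (\<Sum>u\<in>N1. c u)"
          by (rule sum_bounded_below) (use cQ N1sub in auto)
        have s2: "of_nat (card N2) * (n-2) \<le> (\<Sum>u\<in>N2. c u)"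
          by (rule sum_bounded_below) (use cQ N2sub in auto)
        have "(\<Sum>u\<in>P \<union> (N1 \<union> N2). c u) = (\<Sum>u\<in>P. c u) + ((\<Sum>u\<in>N1. c u) + (\<Sum>u\<in>N2. c u))"
        proof -
          have "P \<inter> (N1 \<union> N2) = {}" using N1sub N2sub by blast
          then have "(\<Sum>u\<in>P \<union> (N1 \<union> N2). c u) = (\<Sum>u\<in>P. c u) + (\<Sum>u\<in>N1 \<union> N2. c u)"
            using finP finN1 finN2 by (simp add: sum.union_disjoint)
          moreover have "(\<Sum>u\<in>N1 \<union> N2. c u) = (\<Sum>u\<in>N1. c u) + (\<Sum>u\<in>N2. c u)"
            using finN1 finN2 disj12 by (simp add: sum.union_disjoint)
          ultimately show ?thesis by simp
        qed
        moreover have "(\<Sum>u\<in>P \<union> (N1 \<union> N2). c u) \<le> (\<Sum>u\<in>V. c u)"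
          using finV PV N1sub N2sub by (intro sum_mono2) auto
        ultimately have tot: "(n-1) * card P + 1 + (card N1 * (n-2) + card N2 * (n-2)) \<le> (n-1) * \<delta>"
          using sumP s1 s2 cardS assms(8) unfolding \<delta>_def by simp
        define t where "t = \<delta> - card P"
        have dt: "\<delta> = card P + t" using Pcard unfolding t_def by simp
        have "t * (n-2) \<le> card N1 * (n-2)" "t * (n-2) \<le> card N2 * (n-2)"
          using cN1 cN2 unfolding t_def by (simp_all add: mult_right_mono)
        moreover have "t * (n-1) \<le> t * (n-2) + t * (n-2)"
        proof -
          have "n - 1 \<le> (n-2) + (n-2)" using assms(6) by simp
          then have "t * (n-1) \<le> t * ((n-2) + (n-2))" by (rule mult_left_mono) simp
          then show ?thesis by (simp add: distrib_left)
        qed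
        ultimately show False using tot dt by (simp add: algebra_simps)
      qed
    qed
  qed
  then show ?thesis using Rne unfolding connected_on_def rel_def R_def H_def K_def K_vertices_def
    by simp
qed

end
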